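(* Let $f(x)=\sum_{n\ge1}q_n x^n$ be a formal power series with complex coefficients and $q:=q_1\ne0$. For all integers $s\ge 0$ and $n\ge k\ge 0$, \[ \begin{bmatrix} n\\ k\end{bmatrix}_{\phi^s}=\frac{n!}{k!}\sum_{\vec L\in\mathcal P_{n-k}} C(\vec L)\prod_{p=1}^{n-k} q_{p+1}^{L_p}, \] where \[ C(\vec L):=\sum_{\vec\ell_1+\cdots+\vec\ell_s=\vec L} q^{\sum_{t=1}^s (s-t)\langle\vec\ell_t\rangle+sk-|\vec L|}\prod_{i=1}^s\binom{\sum_{t=1}^{i-1}\langle\vec\ell_t\rangle+k}{\vec\ell_i,\ \sum_{t=1}^{i-1}\langle\vec\ell_t\rangle+k-|\vec\ell_i|}, \] the sum being over all $s$-tuples $(\vec\ell_1,\dots,\vec\ell_s)$ of finitely supported sequences $\vec\ell_t\in\mathbb{N}^{\mathbb{N}^*}$ with $\vec\ell_1+\cdots+\vec\ell_s=\vec L$ (componentwise).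
   Context: For an integer $s\ge0$, $f^s$ is the $s$-fold compositional iterate of $f$ ($f^0(x)=x$), and $\begin{bmatrix} n\\ k\end{bmatrix}_{\phi^s}$ is defined by $\frac{f^s(x)^k}{k!}=\sum_{n\ge k}\begin{bmatrix} n\\ k\end{bmatrix}_{\phi^s}\frac{x^n}{n!}$. Multi-indices: $\vec\ell=(\ell_1,\ell_2,\dots)$ with $\ell_p\in\mathbb{N}$ and finitely many nonzero; $|\vec\ell|:=\sum_p\ell_p$ and $\langle\vec\ell\rangle:=\sum_p p\,\ell_p$. $\mathcal P_m$ is the set of such $\vec\ell$ with $\ell_p=0$ for $p>m$ and $\langle\vec\ell\rangle=m$. For an integer $N$ and multi-index $\vec\ell$, $\binom{N}{\vec\ell,\,r}:=\frac{N!}{\ell_1!\ell_2!\cdots\, r!}$ with $r=N-|\vec\ell|$, understood to be $0$ when $r<0$. *)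

theory Defs
  imports "HOL-Computational_Algebra.Formal_Power_Series"
begin

definition fps_iter :: "complex fps \<Rightarrow> nat \<Rightarrow> complex fps" where
  "fps_iter f s = ((\<lambda>g. fps_compose f g) ^^ s) fps_X"

definition phi_bracket :: "complex fps \<Rightarrow> nat \<Rightarrow> nat \<Rightarrow> nat \<Rightarrow> complex" where
  "phi_bracket f s n k = fact n * fps_nth (fps_const (1 / fact k) * (fps_iter f s) ^ k) n"

text \<open>Multi-indices (l_1, l_2, ...) are functions nat => nat with l 0 = 0 and finite support.\<close>
definition mi_abs :: "(nat \<Rightarrow> nat) \<Rightarrow> nat" where
  "mi_abs l = (\<Sum>p\<in>{p. l p \<noteq> 0}. l p)"

definition mi_wt :: "(nat \<Rightarrow> nat) \<Rightarrow> nat" where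
  "mi_wt l = (\<Sum>p\<in>{p. l p \<noteq> 0}. p * l p)"

definition mi_P :: "nat \<Rightarrow> (nat \<Rightarrow> nat) set" where
  "mi_P m = {l. l 0 = 0 \<and> (\<forall>p>m. l p = 0) \<and> mi_wt l = m}"

definition mi_multinom :: "nat \<Rightarrow> (nat \<Rightarrow> nat) \<Rightarrow> complex" where
  "mi_multinom N l = (if mi_abs l \<le> N then
      of_nat (fact N) / (of_nat ((\<Prod>p\<in>{p. l p \<noteq> 0}. fact (l p)) * fact (N - mi_abs l)))
    else 0)"

definition mi_decomp :: "nat \<Rightarrow> (nat \<Rightarrow> nat) \<Rightarrow> (nat \<Rightarrow> nat \<Rightarrow> nat) set" where
  "mi_decomp s L = {ls. (\<forall>t. t \<notin> {1..s} \<longrightarrow> ls t = (\<lambda>_. 0))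
      \<and> (\<forall>t\<in>{1..s}. ls t 0 = 0 \<and> finite {p. ls t p \<noteq> 0})
      \<and> (\<forall>p. (\<Sum>t=1..s. ls t p) = L p)}"

definition coeffC :: "complex fps \<Rightarrow> nat \<Rightarrow> nat \<Rightarrow> (nat \<Rightarrow> nat) \<Rightarrow> complex" where
  "coeffC f s k L = (\<Sum>ls\<in>mi_decomp s L.
      (fps_nth f 1) powi ((\<Sum>t=1..s. int (s - t) * int (mi_wt (ls t))) + int s * int k - int (mi_abs L))
      * (\<Prod>i=1..s. mi_multinom ((\<Sum>t=1..i-1. mi_wt (ls t)) + k) (ls i)))"

end

theory Submission
  imports Defs
begin

lemma mi_abs_eq: "finite A \<Longrightarrow> {p. l p \<noteq> 0} \<subseteq> A \<Longrightarrow> mi_abs l = (\<Sum>p\<in>A. l p)"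
  unfolding mi_abs_def by (rule sum.mono_neutral_left) auto

lemma mi_wt_eq: "finite A \<Longrightarrow> {p. l p \<noteq> 0} \<subseteq> A \<Longrightarrow> mi_wt l = (\<Sum>p\<in>A. p * l p)"
  unfolding mi_wt_def by (rule sum.mono_neutral_left) auto

lemma prod_fact_eq: "finite A \<Longrightarrow> {p. l p \<noteq> 0} \<subseteq> A \<Longrightarrow>
   (\<Prod>p\<in>{p. l p \<noteq> 0}. fact (l p) :: nat) = (\<Prod>p\<in>A. fact (l p))"
  by (rule prod.mono_neutral_left) auto

lemma prod_pow_eq: "finite A \<Longrightarrow> {p. l p \<noteq> 0} \<subseteq> A \<Longrightarrow>
   (\<Prod>p\<in>{p. l p \<noteq> 0}. (a p :: complex) ^ l p) = (\<Prod>p\<in>A. a p ^ l p)"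
  by (rule prod.mono_neutral_left) auto

lemma mi_P_supp: "l \<in> mi_P m \<Longrightarrow> {p. l p \<noteq> 0} \<subseteq> {1..m}"
proof
  fix x assume "x \<in> {p. l p \<noteq> 0}" "l \<in> mi_P m"
  then have "l x \<noteq> 0" "l 0 = 0" "\<forall>p>m. l p = 0" by (auto simp: mi_P_def)
  then have "x \<noteq> 0" "\<not> x > m" by (metis, metis)
  then show "x \<in> {1..m}" by auto
qed

lemma mi_P_wt: "l \<in> mi_P m \<Longrightarrow> mi_wt l = (\<Sum>p\<in>{1..m}. p * l p)"
  using mi_P_supp mi_wt_eq by blast

lemma mi_P_le: assumes "l \<in> mi_P m" shows "p * l p \<le> m"
proof (cases "p \<in> {1..m}")
  case True
  have "p * l p \<le> (\<Sum>x\<in>{1..m}. x * l x)"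
    by (rule member_le_sum) (use True in auto)
  then show ?thesis using mi_P_wt[OF assms] assms by (simp add: mi_P_def)
next
  case False
  then have "l p = 0" using mi_P_supp[OF assms] by auto
  then show ?thesis by simp
qed

lemma finite_mi_P: "finite (mi_P m)"
proof (rule finite_subset)
  show "mi_P m \<subseteq> {g. \<forall>x. (x \<in> {1..m} \<longrightarrow> g x \<in> {0..m}) \<and> (x \<notin> {1..m} \<longrightarrow> g x = 0)}"
  proof safe
    fix l x assume l: "l \<in> mi_P m"
    { assume "x \<in> {1..m}"
      then have "1 * l x \<le> x * l x" by (intro mult_right_mono) auto
      with mi_P_le[OF l, of x] have "l x \<le> m" by linarith
      then show "l x \<in> {0..m}" by simp }
    { assume "x \<notin> {1..m}" then show "l x = 0" using mi_P_supp[OF l] by auto }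
  qed
qed (rule finite_set_of_finite_funs; simp)

lemma gen1: "(c::complex) \<noteq> 0 \<Longrightarrow> a * (F / Y * Q * X') = c * (F / (c * Y) * Q * (a * X'))"
  by (cases "Y = 0") (simp_all add: field_simps)

definition abA :: "nat set \<Rightarrow> (nat \<Rightarrow> nat) \<Rightarrow> nat" where
  "abA A l = (\<Sum>p\<in>A. l p)"

definition ccA :: "complex fps \<Rightarrow> nat set \<Rightarrow> nat \<Rightarrow> (nat \<Rightarrow> nat) \<Rightarrow> complex" where
  "ccA f A N l = (if abA A l \<le> N then
     of_nat (fact N) / of_nat ((\<Prod>p\<in>A. fact (l p)) * fact (N - abA A l))
     * (fps_nth f 1) ^ (N - abA A l) * (\<Prod>p\<in>A. (fps_nth f (p+1)) ^ (l p)) else 0)"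

lemma ccA_pascal:
  assumes A: "finite A"
  shows "ccA f A (Suc N) l = fps_nth f 1 * ccA f A N l +
    (\<Sum>p\<in>A. if 0 < l p then fps_nth f (p+1) * ccA f A N (l(p := l p - 1)) else 0)"
proof (cases "abA A l \<le> Suc N")
  case False
  have "(\<Sum>p\<in>A. if 0 < l p then fps_nth f (p+1) * ccA f A N (l(p := l p - 1)) else 0) = 0"
  proof (rule sum.neutral, intro ballI)
    fix p assume p: "p \<in> A"
    show "(if 0 < l p then fps_nth f (p+1) * ccA f A N (l(p := l p - 1)) else 0) = 0"
    proof (cases "0 < l p")
      case True
      have "abA A (l(p := l p - 1)) = abA A l - 1"
        using p A True unfolding abA_def by (simp add: sum.remove)
      then show ?thesis using False by (simp add: ccA_def)
    qed simp
  qed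
  then show ?thesis using False by (simp add: ccA_def)
next
  case True
  define S where "S = abA A l"
  define D where "D = (\<Prod>p\<in>A. fact (l p) :: nat)"
  define X where "X = (\<Prod>p\<in>A. (fps_nth f (p+1)) ^ (l p))"
  define Z where "Z = of_nat (fact N) / of_nat (D * fact (Suc N - S)) * (fps_nth f 1) ^ (Suc N - S) * X"
  have SN: "S \<le> Suc N" using True S_def by simp
  have D0: "D \<noteq> 0" unfolding D_def by (simp add: A)
  have lhs: "ccA f A (Suc N) l = of_nat (Suc N) * Z"
  proof -
    have "ccA f A (Suc N) l = of_nat (fact (Suc N)) / of_nat (D * fact (Suc N - S)) * (fps_nth f 1) ^ (Suc N - S) * X"
      using SN unfolding ccA_def S_def[symmetric] D_def[symmetric] X_def[symmetric] by simp
    also have "\<dots> = of_nat (Suc N) * Z"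
      unfolding Z_def fact_Suc of_nat_mult by simp
    finally show ?thesis .
  qed
  have t1: "fps_nth f 1 * ccA f A N l = of_nat (Suc N - S) * Z"
  proof (cases "S \<le> N")
    case True
    then have e: "Suc N - S = Suc (N - S)" by simp
    obtain r where r: "N - S = r" by blast
    then have r1: "Suc N - S = Suc r" using e by simp
    have fr: "(of_nat (D * fact (Suc r)) :: complex) = of_nat (Suc r) * of_nat (D * fact r)"
      by (simp only: fact_Suc of_nat_mult mult.left_commute of_nat_id id_apply)
    have gen: "c \<noteq> 0 \<Longrightarrow> q * (F / Y * p * X') = c * (F / (c * Y) * (q * p) * X')" for c q F Y p X' :: complex
      using gen1[of c q F Y p X'] by (simp add: mult_ac)
    have "fps_nth f 1 * ccA f A N l = fps_nth f 1 * (of_nat (fact N) / of_nat (D * fact r) * (fps_nth f 1) ^ r * X)"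
      using True unfolding ccA_def S_def[symmetric] D_def[symmetric] X_def[symmetric] r by simp
    also have "\<dots> = of_nat (Suc r) * (of_nat (fact N) / (of_nat (Suc r) * of_nat (D * fact r)) * (fps_nth f 1 * (fps_nth f 1) ^ r) * X)"
      by (rule gen) (rule of_nat_neq_0)
    also have "\<dots> = of_nat (Suc N - S) * Z"
      by (simp only: Z_def r1 fr power_Suc)
    finally show ?thesis .
  next
    case False
    then have "Suc N - S = 0" using SN by simp
    then show ?thesis using False unfolding ccA_def S_def by simp
  qed
  have t2: "(if 0 < l p then fps_nth f (p+1) * ccA f A N (l(p := l p - 1)) else 0) = of_nat (l p) * Z"
    if p: "p \<in> A" for p
  proof (cases "0 < l p")
    case lp: True
    define l' where "l' = l(p := l p - 1)"
    obtain j where jj: "l p = Suc j" using lp gr0_implies_Suc by blast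
    have ab: "abA A l' = S - 1"
    proof -
      have a1: "abA A l = l p + (\<Sum>q\<in>A-{p}. l q)" unfolding abA_def by (rule sum.remove[OF A p])
      have a2: "abA A l' = l' p + (\<Sum>q\<in>A-{p}. l' q)" unfolding abA_def by (rule sum.remove[OF A p])
      have a3: "(\<Sum>q\<in>A-{p}. l' q) = (\<Sum>q\<in>A-{p}. l q)" by (rule sum.cong) (auto simp: l'_def)
      have a4: "l' p = l p - 1" by (simp add: l'_def)
      show ?thesis using a1 a2 a3 a4 lp unfolding S_def by linarith
    qed
    have S1: "S \<ge> 1"
    proof -
      have "l p \<le> (\<Sum>q\<in>A. l q)" by (rule member_le_sum) (use p A in auto)
      then show ?thesis using lp unfolding S_def abA_def by linarith
    qed
    have Dl: "D = l p * (\<Prod>q\<in>A. fact (l' q))"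
    proof -
      have d1: "D = fact (l p) * (\<Prod>q\<in>A-{p}. fact (l q))" unfolding D_def by (rule prod.remove[OF A p])
      have d2: "(\<Prod>q\<in>A-{p}. fact (l q)) = (\<Prod>q\<in>A-{p}. fact (l' q))" by (rule prod.cong) (auto simp: l'_def)
      have d3: "fact (l p) = l p * fact (l' p)" using jj by (simp add: l'_def)
      have d4: "(\<Prod>q\<in>A. fact (l' q)) = fact (l' p) * (\<Prod>q\<in>A-{p}. fact (l' q))" by (rule prod.remove[OF A p])
      show ?thesis by (simp only: d1 d2 d3 d4 mult.assoc)
    qed
    have Xl: "X = fps_nth f (p+1) * (\<Prod>q\<in>A. (fps_nth f (q+1)) ^ (l' q))"
    proof -
      have d1: "X = fps_nth f (p+1) ^ l p * (\<Prod>q\<in>A-{p}. (fps_nth f (q+1)) ^ (l q))" unfolding X_def by (rule prod.remove[OF A p])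
      have d2: "(\<Prod>q\<in>A-{p}. (fps_nth f (q+1)) ^ (l q)) = (\<Prod>q\<in>A-{p}. (fps_nth f (q+1)) ^ (l' q))" by (rule prod.cong) (auto simp: l'_def)
      have d3: "fps_nth f (p+1) ^ l p = fps_nth f (p+1) * fps_nth f (p+1) ^ l' p" using jj by (simp add: l'_def)
      have d4: "(\<Prod>q\<in>A. (fps_nth f (q+1)) ^ (l' q)) = fps_nth f (p+1) ^ l' p * (\<Prod>q\<in>A-{p}. (fps_nth f (q+1)) ^ (l' q))" by (rule prod.remove[OF A p])
      show ?thesis by (simp only: d1 d2 d3 d4 mult.assoc)
    qed
    have le: "abA A l' \<le> N" using ab SN S1 by simp
    have e: "N - abA A l' = Suc N - S" using ab SN S1 by simp
    have "fps_nth f (p+1) * ccA f A N l' = fps_nth f (p+1) * (of_nat (fact N) / of_nat ((\<Prod>q\<in>A. fact (l' q)) * fact (Suc N - S))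
       * (fps_nth f 1) ^ (Suc N - S) * (\<Prod>q\<in>A. (fps_nth f (q+1)) ^ (l' q)))"
      unfolding ccA_def e using le by simp
    also have "\<dots> = of_nat (l p) * (of_nat (fact N) / (of_nat (l p) * of_nat ((\<Prod>q\<in>A. fact (l' q)) * fact (Suc N - S)))
       * (fps_nth f 1) ^ (Suc N - S) * (fps_nth f (p+1) * (\<Prod>q\<in>A. (fps_nth f (q+1)) ^ (l' q))))"
      by (rule gen1) (use lp in simp)
    also have "\<dots> = of_nat (l p) * Z"
      unfolding Z_def Dl Xl by (simp only: of_nat_mult mult.assoc)
    finally have "fps_nth f (p+1) * ccA f A N l' = of_nat (l p) * Z" .
    then show ?thesis using lp l'_def by simp
  qed simp
  have "(\<Sum>p\<in>A. if 0 < l p then fps_nth f (p+1) * ccA f A N (l(p := l p - 1)) else 0)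
        = (\<Sum>p\<in>A. of_nat (l p) * Z)" by (rule sum.cong) (use t2 in auto)
  also have "\<dots> = of_nat S * Z" unfolding S_def abA_def by (simp add: sum_distrib_right)
  finally have t3: "(\<Sum>p\<in>A. if 0 < l p then fps_nth f (p+1) * ccA f A N (l(p := l p - 1)) else 0) = of_nat S * Z" .
  have "of_nat (Suc N - S) * Z + of_nat S * Z = of_nat (Suc N - S + S) * Z"
    by (simp only: of_nat_add distrib_right)
  also have "Suc N - S + S = Suc N" using SN by simp
  finally show ?thesis using lhs t1 t3 by simp
qed

definition cc :: "complex fps \<Rightarrow> nat \<Rightarrow> (nat \<Rightarrow> nat) \<Rightarrow> complex" where
  "cc f N l = mi_multinom N l * (fps_nth f 1) ^ (N - mi_abs l) * (\<Prod>p\<in>{p. l p \<noteq> 0}. (fps_nth f (p+1)) ^ (l p))"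

lemma cc_ccA: assumes "finite A" "{p. l p \<noteq> 0} \<subseteq> A" shows "cc f N l = ccA f A N l"
proof -
  have a: "mi_abs l = abA A l" using mi_abs_eq[OF assms] by (simp add: abA_def)
  show ?thesis
    unfolding cc_def ccA_def mi_multinom_def a prod_fact_eq[OF assms] prod_pow_eq[OF assms] by simp
qed

lemma wt_ge: assumes "finite {p. l p \<noteq> 0}" shows "x * l x \<le> mi_wt l"
proof (cases "l x = 0")
  case False
  then show ?thesis unfolding mi_wt_def by (intro member_le_sum) (use assms in auto)
qed simp

lemma P_memI: assumes "l 0 = 0" "finite {p. l p \<noteq> 0}" "mi_wt l = m" shows "l \<in> mi_P m"
proof -
  have "l x = 0" if "x > m" for x
  proof (rule ccontr)
    assume "l x \<noteq> 0"
    then have "x * 1 \<le> x * l x" by (intro mult_left_mono) auto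
    with wt_ge[OF assms(2), of x] assms(3) that show False by linarith
  qed
  then show ?thesis using assms unfolding mi_P_def by auto
qed

lemma P_fin: "l \<in> mi_P m \<Longrightarrow> finite {p. l p \<noteq> 0}"
  using mi_P_supp finite_subset by blast

lemma upd_wt:
  assumes A: "finite A" and s: "{x. l x \<noteq> 0} \<subseteq> A" and p: "p \<in> A"
  shows "mi_wt (l(p:=v)) + p * l p = mi_wt l + p * v"
proof -
  have s2: "{x. (l(p:=v)) x \<noteq> 0} \<subseteq> A" using s p by auto
  have w1: "mi_wt l = p * l p + (\<Sum>x\<in>A-{p}. x * l x)"
    unfolding mi_wt_eq[OF A s] by (rule sum.remove[OF A p])
  have w2: "mi_wt (l(p:=v)) = p * v + (\<Sum>x\<in>A-{p}. x * (l(p:=v)) x)"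
    unfolding mi_wt_eq[OF A s2] using sum.remove[OF A p, of "\<lambda>x. x * (l(p:=v)) x"] by simp
  have w3: "(\<Sum>x\<in>A-{p}. x * (l(p:=v)) x) = (\<Sum>x\<in>A-{p}. x * l x)" by (rule sum.cong) auto
  show ?thesis using w1 w2 w3 by simp
qed

lemma reindex_P:
  assumes p: "p \<in> {1..m}"
  shows "(\<Sum>l\<in>{l\<in>mi_P m. 0 < l p}. g (l(p := l p - 1))) = (\<Sum>l\<in>mi_P (m-p). g l)"
proof (rule sum.reindex_bij_witness[where i = "\<lambda>l. l(p := Suc (l p))" and j = "\<lambda>l. l(p := l p - 1)"])
  fix a assume a: "a \<in> {l\<in>mi_P m. 0 < l p}"
  then show "(a(p := a p - 1))(p := Suc ((a(p := a p - 1)) p)) = a" by auto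
  have aP: "a \<in> mi_P m" and ap: "0 < a p" using a by auto
  have w: "mi_wt (a(p := a p - 1)) + p * a p = mi_wt a + p * (a p - 1)"
    by (rule upd_wt[OF _ mi_P_supp[OF aP]]) (use p in auto)
  have wa: "mi_wt a = m" using aP by (simp add: mi_P_def)
  have "p * a p = p * (a p - 1) + p" using ap by (simp add: algebra_simps)
  then have w': "mi_wt (a(p := a p - 1)) = m - p" using w wa by linarith
  have "finite {x. (a(p := a p - 1)) x \<noteq> 0}"
    by (rule finite_subset[OF _ P_fin[OF aP]]) auto
  moreover have "(a(p := a p - 1)) 0 = 0" using aP p by (auto simp: mi_P_def)
  ultimately show "a(p := a p - 1) \<in> mi_P (m - p)" using P_memI w' by blast
next
  fix b assume bP: "b \<in> mi_P (m - p)"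
  then show "(b(p := Suc (b p)))(p := (b(p := Suc (b p))) p - 1) = b" by auto
  have s: "{x. b x \<noteq> 0} \<subseteq> {1..m}" 
  proof -
    have "{1..m-p} \<subseteq> {1..m}" by auto
    then show ?thesis using mi_P_supp[OF bP] by blast
  qed
  have w: "mi_wt (b(p := Suc (b p))) + p * b p = mi_wt b + p * Suc (b p)"
    by (rule upd_wt[OF _ s]) (use p in auto)
  have wb: "mi_wt b = m - p" using bP by (simp add: mi_P_def)
  have w': "mi_wt (b(p := Suc (b p))) = m" using w wb p by simp
  have "finite {x. (b(p := Suc (b p))) x \<noteq> 0}"
    by (rule finite_subset[OF _ finite_atLeastAtMost[of 1 m]]) (use s p in auto)
  moreover have "(b(p := Suc (b p))) 0 = 0" using bP p by (auto simp: mi_P_def)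
  ultimately show "b(p := Suc (b p)) \<in> {l\<in>mi_P m. 0 < l p}" using P_memI w' by auto
qed simp

lemma fps_pow_step:
  fixes f :: "complex fps"
  assumes f0: "fps_nth f 0 = 0"
  shows "fps_nth (f^Suc N) (Suc N + m) = fps_nth f 1 * fps_nth (f^N) (N+m)
     + (\<Sum>p=1..m. fps_nth f (p+1) * fps_nth (f^N) (N+(m-p)))"
proof -
  have "fps_nth (f^Suc N) (Suc N + m) = (\<Sum>i=0..Suc N + m. fps_nth f i * fps_nth (f^N) (Suc N + m - i))"
    by (simp add: fps_mult_nth)
  also have "\<dots> = (\<Sum>i=Suc 0..Suc m. fps_nth f i * fps_nth (f^N) (Suc N + m - i))"
  proof (rule sum.mono_neutral_right)
    show "\<forall>i\<in>{0..Suc N + m} - {Suc 0..Suc m}. fps_nth f i * fps_nth (f^N) (Suc N + m - i) = 0"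
    proof
      fix i assume i: "i \<in> {0..Suc N + m} - {Suc 0..Suc m}"
      show "fps_nth f i * fps_nth (f^N) (Suc N + m - i) = 0"
      proof (cases "i = 0")
        case True then show ?thesis using f0 by simp
      next
        case False
        then have "Suc N + m - i < N" using i by auto
        then show ?thesis using startsby_zero_power_prefix[OF f0, of N] by simp
      qed
    qed
  qed auto
  also have "\<dots> = (\<Sum>p=0..m. fps_nth f (Suc p) * fps_nth (f^N) (Suc N + m - Suc p))"
    by (rule sum.shift_bounds_cl_Suc_ivl)
  also have "\<dots> = (\<Sum>p=0..m. fps_nth f (p+1) * fps_nth (f^N) (N + (m - p)))"
    by (rule sum.cong) auto
  also have "\<dots> = fps_nth f 1 * fps_nth (f^N) (N+m) + (\<Sum>p=Suc 0..m. fps_nth f (p+1) * fps_nth (f^N) (N+(m-p)))"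
    by (subst sum.atLeast_Suc_atMost) auto
  finally show ?thesis by simp
qed

lemma lemA:
  fixes f :: "complex fps"
  assumes f0: "fps_nth f 0 = 0"
  shows "fps_nth (f^N) (N+m) = (\<Sum>l\<in>mi_P m. cc f N l)"
proof (induction N arbitrary: m)
  case 0
  define z where "z = (\<lambda>_::nat. 0::nat)"
  have zwt: "mi_wt z = 0" unfolding mi_wt_def z_def by simp
  have zab: "mi_abs z = 0" unfolding mi_abs_def z_def by simp
  have cz: "cc f 0 z = 1" unfolding cc_def mi_multinom_def zab by (simp add: z_def)
  have c0: "cc f 0 l = 0" if l: "l \<in> mi_P m" "l \<noteq> z" for l
  proof -
    obtain x where x: "l x \<noteq> 0" using l(2) unfolding z_def by auto
    have "l x \<le> mi_abs l" unfolding mi_abs_def by (rule member_le_sum) (use x P_fin[OF l(1)] in auto)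
    then have "\<not> mi_abs l \<le> 0" using x by linarith
    then show ?thesis unfolding cc_def mi_multinom_def by simp
  qed
  show ?case
  proof (cases "m = 0")
    case True
    have zP: "z \<in> mi_P m" using True zwt unfolding mi_P_def z_def by simp
    have "(\<Sum>l\<in>mi_P m. cc f 0 l) = cc f 0 z + (\<Sum>l\<in>mi_P m - {z}. cc f 0 l)"
      by (rule sum.remove[OF finite_mi_P zP])
    also have "(\<Sum>l\<in>mi_P m - {z}. cc f 0 l) = 0" by (rule sum.neutral) (use c0 in auto)
    finally show ?thesis using True cz by simp
  next
    case False
    have "z \<notin> mi_P m" using False zwt unfolding mi_P_def by simp
    then have "(\<Sum>l\<in>mi_P m. cc f 0 l) = 0" by (intro sum.neutral) (use c0 in blast)
    then show ?thesis using False by simp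
  qed
next
  case (Suc N)
  define A where "A = {1..m}"
  have A: "finite A" unfolding A_def by simp
  define G where "G = (\<lambda>p l. fps_nth f (p+1) * ccA f A N (l(p := l p - 1)))"
  have "(\<Sum>l\<in>mi_P m. cc f (Suc N) l) = (\<Sum>l\<in>mi_P m. ccA f A (Suc N) l)"
    by (rule sum.cong) (use cc_ccA[OF A] mi_P_supp in \<open>auto simp: A_def\<close>)
  also have "\<dots> = (\<Sum>l\<in>mi_P m. fps_nth f 1 * ccA f A N l + (\<Sum>p\<in>A. if 0 < l p then G p l else 0))"
    unfolding G_def by (rule sum.cong) (auto simp: ccA_pascal[OF A])
  also have "\<dots> = fps_nth f 1 * (\<Sum>l\<in>mi_P m. ccA f A N l) + (\<Sum>p\<in>A. \<Sum>l\<in>mi_P m. if 0 < l p then G p l else 0)"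
    by (simp add: sum.distrib sum_distrib_left sum.swap[of _ "mi_P m"])
  also have "(\<Sum>l\<in>mi_P m. ccA f A N l) = (\<Sum>l\<in>mi_P m. cc f N l)"
    by (rule sum.cong) (use cc_ccA[OF A] mi_P_supp in \<open>auto simp: A_def\<close>)
  also have "\<dots> = fps_nth (f^N) (N+m)" by (rule Suc.IH[symmetric])
  also have "(\<Sum>p\<in>A. \<Sum>l\<in>mi_P m. if 0 < l p then G p l else 0) = (\<Sum>p\<in>A. fps_nth f (p+1) * fps_nth (f^N) (N+(m-p)))"
  proof (rule sum.cong)
    fix p assume p: "p \<in> A"
    have "(\<Sum>l\<in>mi_P m. if 0 < l p then G p l else 0) = (\<Sum>l\<in>{l\<in>mi_P m. 0 < l p}. G p l)"
      by (rule sum.inter_filter[symmetric, OF finite_mi_P])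
    also have "\<dots> = (\<Sum>l\<in>mi_P (m-p). fps_nth f (p+1) * ccA f A N l)"
      unfolding G_def by (rule reindex_P) (use p A_def in simp)
    also have "\<dots> = (\<Sum>l\<in>mi_P (m-p). fps_nth f (p+1) * cc f N l)"
    proof (rule sum.cong)
      fix l assume l: "l \<in> mi_P (m-p)"
      have "{1..m-p} \<subseteq> A" unfolding A_def by auto
      then have "{x. l x \<noteq> 0} \<subseteq> A" using mi_P_supp[OF l] by blast
      then show "fps_nth f (p+1) * ccA f A N l = fps_nth f (p+1) * cc f N l" using cc_ccA[OF A] by simp
    qed simp
    also have "\<dots> = fps_nth f (p+1) * fps_nth (f^N) (N+(m-p))"
      by (simp add: sum_distrib_left[symmetric] Suc.IH)
    finally show "(\<Sum>l\<in>mi_P m. if 0 < l p then G p l else 0) = fps_nth f (p+1) * fps_nth (f^N) (N+(m-p))" .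
  qed simp
  finally show ?case using fps_pow_step[OF f0, of N m] by (simp add: A_def)
qed

definition Tup :: "nat \<Rightarrow> nat \<Rightarrow> (nat \<Rightarrow> nat \<Rightarrow> nat) set" where
  "Tup s M = {ls. (\<forall>t. t \<notin> {1..s} \<longrightarrow> ls t = (\<lambda>_. 0))
      \<and> (\<forall>t\<in>{1..s}. ls t 0 = 0 \<and> finite {p. ls t p \<noteq> 0})
      \<and> (\<Sum>t=1..s. mi_wt (ls t)) = M}"

definition tcons :: "(nat \<Rightarrow> nat) \<Rightarrow> (nat \<Rightarrow> nat \<Rightarrow> nat) \<Rightarrow> (nat \<Rightarrow> nat \<Rightarrow> nat)" where
  "tcons l ls = (\<lambda>t. if t = 0 then (\<lambda>_. 0) else if t = 1 then l else ls (t - 1))"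

definition tshift :: "(nat \<Rightarrow> nat \<Rightarrow> nat) \<Rightarrow> (nat \<Rightarrow> nat \<Rightarrow> nat)" where
  "tshift ls = (\<lambda>t. if t = 0 then (\<lambda>_. 0) else ls (Suc t))"

definition tterm :: "complex fps \<Rightarrow> nat \<Rightarrow> nat \<Rightarrow> (nat \<Rightarrow> nat \<Rightarrow> nat) \<Rightarrow> complex" where
  "tterm f s k ls = (\<Prod>i=1..s. cc f ((\<Sum>t=1..i-1. mi_wt (ls t)) + k) (ls i))"

definition GG :: "complex fps \<Rightarrow> nat \<Rightarrow> nat \<Rightarrow> nat \<Rightarrow> complex" where
  "GG f s k M = (\<Sum>ls\<in>Tup s M. tterm f s k ls)"

lemma sum_split1: "(\<Sum>t=1..Suc s. g t) = g 1 + (\<Sum>t=1..s. g (Suc t))" for g :: "nat \<Rightarrow> 'a::comm_monoid_add"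
proof -
  have "(\<Sum>t=1..Suc s. g t) = g 1 + (\<Sum>t=Suc 1..Suc s. g t)" by (rule sum.atLeast_Suc_atMost) simp
  also have "(\<Sum>t=Suc 1..Suc s. g t) = (\<Sum>t=1..s. g (Suc t))" by (rule sum.shift_bounds_cl_Suc_ivl)
  finally show ?thesis .
qed

lemma prod_split1: "(\<Prod>t=1..Suc s. g t) = g 1 * (\<Prod>t=1..s. g (Suc t))" for g :: "nat \<Rightarrow> 'a::comm_monoid_mult"
proof -
  have "(\<Prod>t=1..Suc s. g t) = g 1 * (\<Prod>t=Suc 1..Suc s. g t)" by (rule prod.atLeast_Suc_atMost) simp
  also have "(\<Prod>t=Suc 1..Suc s. g t) = (\<Prod>t=1..s. g (Suc t))" by (rule prod.shift_bounds_cl_Suc_ivl)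
  finally show ?thesis .
qed

lemma tshift_tcons: "ls \<in> Tup s M' \<Longrightarrow> tshift (tcons l ls) = ls"
  unfolding tshift_def tcons_def Tup_def by (rule ext) auto

lemma tcons_tshift: "ls \<in> Tup (Suc s) M \<Longrightarrow> tcons (ls 1) (tshift ls) = ls"
  unfolding tshift_def tcons_def Tup_def by (rule ext) auto

definition SigT :: "nat \<Rightarrow> nat \<Rightarrow> ((nat \<Rightarrow> nat) \<times> (nat \<Rightarrow> nat \<Rightarrow> nat)) set" where
  "SigT s M = (SIGMA l:(\<Union>m\<in>{0..M}. mi_P m). Tup s (M - mi_wt l))"

lemma P_wt: "l \<in> mi_P m \<Longrightarrow> mi_wt l = m" by (simp add: mi_P_def)

lemma bij_tcons: "bij_betw (\<lambda>(l, ls). tcons l ls) (SigT s M) (Tup (Suc s) M)"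
proof (rule bij_betw_byWitness[where f' = "\<lambda>ls. (ls 1, tshift ls)"])
  show "\<forall>a\<in>SigT s M. (\<lambda>ls. (ls 1, tshift ls)) ((\<lambda>(l, ls). tcons l ls) a) = a"
    unfolding SigT_def by (auto simp: tshift_tcons) (simp add: tcons_def)
  show "\<forall>a'\<in>Tup (Suc s) M. (\<lambda>(l, ls). tcons l ls) ((\<lambda>ls. (ls 1, tshift ls)) a') = a'"
    by (intro ballI) (simp only: prod.case tcons_tshift)
  show "(\<lambda>(l, ls). tcons l ls) ` SigT s M \<subseteq> Tup (Suc s) M"
  proof clarify
    fix l ls assume a: "(l, ls) \<in> SigT s M"
    then obtain m where m: "m \<in> {0..M}" "l \<in> mi_P m" and ls: "ls \<in> Tup s (M - m)"
      unfolding SigT_def using P_wt by auto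
    have wl: "mi_wt l = m" using P_wt[OF m(2)] .
    have "(\<Sum>t=1..Suc s. mi_wt (tcons l ls t)) = mi_wt l + (\<Sum>t=1..s. mi_wt (ls t))"
      unfolding sum_split1 by (simp add: tcons_def)
    also have "\<dots> = M" using ls wl m(1) unfolding Tup_def by simp
    finally have sw: "(\<Sum>t=1..Suc s. mi_wt (tcons l ls t)) = M" .
    have out: "tcons l ls t = (\<lambda>_. 0)" if t: "t \<notin> {1..Suc s}" for t
    proof (cases "t = 0")
      case False
      then have "t - 1 \<notin> {1..s}" "t \<noteq> 1" using t by auto
      then show ?thesis using ls unfolding tcons_def Tup_def by auto
    qed (simp add: tcons_def)
    have inn: "tcons l ls t 0 = 0 \<and> finite {p. tcons l ls t p \<noteq> 0}" if t: "t \<in> {1..Suc s}" for t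
    proof (cases "t = 1")
      case True
      then show ?thesis using m(2) P_fin[OF m(2)] unfolding tcons_def mi_P_def by auto
    next
      case False
      then have "t - 1 \<in> {1..s}" using t by auto
      then show ?thesis using False t ls unfolding tcons_def Tup_def by auto
    qed
    show "tcons l ls \<in> Tup (Suc s) M" unfolding Tup_def using sw out inn by blast
  qed
  show "(\<lambda>ls. (ls 1, tshift ls)) ` Tup (Suc s) M \<subseteq> SigT s M"
  proof clarify
    fix ls assume ls: "ls \<in> Tup (Suc s) M"
    have l1: "ls 1 0 = 0" "finite {p. ls 1 p \<noteq> 0}" using ls unfolding Tup_def by auto
    have sw: "mi_wt (ls 1) + (\<Sum>t=1..s. mi_wt (ls (Suc t))) = M"
      using ls unfolding Tup_def sum_split1 by simp
    have P1: "ls 1 \<in> mi_P (mi_wt (ls 1))" by (rule P_memI[OF l1 refl])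
    have "tshift ls \<in> Tup s (M - mi_wt (ls 1))"
    proof -
      have "(\<Sum>t=1..s. mi_wt (tshift ls t)) = (\<Sum>t=1..s. mi_wt (ls (Suc t)))"
        by (rule sum.cong) (auto simp: tshift_def)
      then have "(\<Sum>t=1..s. mi_wt (tshift ls t)) = M - mi_wt (ls 1)" using sw by simp
      moreover have "\<forall>t. t \<notin> {1..s} \<longrightarrow> tshift ls t = (\<lambda>_. 0)"
        using ls unfolding tshift_def Tup_def by auto
      moreover have "\<forall>t\<in>{1..s}. tshift ls t 0 = 0 \<and> finite {p. tshift ls t p \<noteq> 0}"
        using ls unfolding tshift_def Tup_def by auto
      ultimately show ?thesis unfolding Tup_def by blast
    qed
    moreover have "mi_wt (ls 1) \<in> {0..M}" using sw by simp
    ultimately show "(ls 1, tshift ls) \<in> SigT s M" unfolding SigT_def using P1 by blast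
  qed
qed

lemma Tup0: "Tup 0 M = (if M = 0 then {\<lambda>_ _. 0} else {})"
  unfolding Tup_def by (auto simp: mi_wt_def)

lemma finite_Tup: "finite (Tup s M)"
proof (induction s arbitrary: M)
  case 0 then show ?case by (simp add: Tup0)
next
  case (Suc s)
  have "finite (SigT s M)" unfolding SigT_def
    by (intro finite_SigmaI finite_UN_I) (auto simp: finite_mi_P Suc.IH)
  then show ?case using bij_betw_finite[OF bij_tcons] by blast
qed

lemma tterm_tcons: "tterm f (Suc s) k (tcons l ls) = cc f k l * tterm f s (k + mi_wt l) ls"
proof -
  have "tterm f (Suc s) k (tcons l ls) = cc f k l * (\<Prod>i=1..s. cc f ((\<Sum>t=1..i. mi_wt (tcons l ls t)) + k) (ls i))"
    unfolding tterm_def prod_split1 by (simp add: tcons_def)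
  also have "(\<Prod>i=1..s. cc f ((\<Sum>t=1..i. mi_wt (tcons l ls t)) + k) (ls i)) = tterm f s (k + mi_wt l) ls"
    unfolding tterm_def
  proof (rule prod.cong)
    fix i assume i: "i \<in> {1..s}"
    then obtain j where j: "i = Suc j" by (cases i) auto
    have "(\<Sum>t=1..i. mi_wt (tcons l ls t)) = mi_wt l + (\<Sum>t=1..i-1. mi_wt (ls t))"
      unfolding j sum_split1 by (simp add: tcons_def)
    then show "cc f ((\<Sum>t=1..i. mi_wt (tcons l ls t)) + k) (ls i) = cc f ((\<Sum>t=1..i-1. mi_wt (ls t)) + (k + mi_wt l)) (ls i)"
      by (simp add: add_ac)
  qed simp
  finally show ?thesis .
qed

lemma GG_Suc: "GG f (Suc s) k M = (\<Sum>m=0..M. \<Sum>l\<in>mi_P m. cc f k l * GG f s (k+m) (M-m))"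
proof -
  have "GG f (Suc s) k M = (\<Sum>x\<in>SigT s M. tterm f (Suc s) k ((\<lambda>(l, ls). tcons l ls) x))"
    unfolding GG_def by (rule sum.reindex_bij_betw[OF bij_tcons, symmetric])
  also have "\<dots> = (\<Sum>l\<in>(\<Union>m\<in>{0..M}. mi_P m). \<Sum>ls\<in>Tup s (M - mi_wt l). tterm f (Suc s) k (tcons l ls))"
    unfolding SigT_def by (subst sum.Sigma) (auto simp: finite_mi_P finite_Tup split_def)
  also have "\<dots> = (\<Sum>m=0..M. \<Sum>l\<in>mi_P m. \<Sum>ls\<in>Tup s (M - mi_wt l). tterm f (Suc s) k (tcons l ls))"
    by (rule sum.UNION_disjoint) (auto simp: finite_mi_P dest: P_wt)
  also have "\<dots> = (\<Sum>m=0..M. \<Sum>l\<in>mi_P m. cc f k l * GG f s (k+m) (M-m))"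
    unfolding GG_def by (intro sum.cong refl) (simp add: tterm_tcons P_wt sum_distrib_left)
  finally show ?thesis .
qed

lemma iter_Suc: "fps_iter f (Suc s) = fps_compose f (fps_iter f s)"
  by (simp add: fps_iter_def)

lemma iter0: "fps_nth f 0 = 0 \<Longrightarrow> fps_nth (fps_iter f s) 0 = 0"
  by (induction s) (simp_all add: iter_Suc, simp add: fps_iter_def)

lemma GG0: "GG f 0 k M = (if M = 0 then 1 else 0)"
  unfolding GG_def Tup0 tterm_def by simp

lemma main_T:
  fixes f :: "complex fps"
  assumes f0: "fps_nth f 0 = 0"
  shows "k \<le> n \<Longrightarrow> fps_nth (fps_iter f s ^ k) n = GG f s k (n-k)"
proof (induction s arbitrary: k)
  case 0
  then show ?case by (simp add: GG0 fps_iter_def)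
next
  case (Suc s)
  define g where "g = fps_iter f s"
  have g0: "fps_nth g 0 = 0" unfolding g_def by (rule iter0[OF f0])
  have "fps_nth (fps_iter f (Suc s) ^ k) n = fps_nth (f^k oo g) n"
    unfolding iter_Suc g_def[symmetric] fps_compose_power[OF g0] ..
  also have "\<dots> = (\<Sum>j=0..n. fps_nth (f^k) j * fps_nth (g^j) n)" by (rule fps_compose_nth)
  also have "\<dots> = (\<Sum>j=k..n. fps_nth (f^k) j * fps_nth (g^j) n)"
  proof (rule sum.mono_neutral_right)
    show "\<forall>i\<in>{0..n} - {k..n}. fps_nth (f^k) i * fps_nth (g^i) n = 0"
      using startsby_zero_power_prefix[OF f0, of k] by auto
  qed auto
  also have "\<dots> = (\<Sum>m=0..n-k. fps_nth (f^k) (m+k) * fps_nth (g^(m+k)) n)"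
  proof -
    have "{k..n} = {0+k..(n-k)+k}" using Suc.prems by simp
    then show ?thesis by (simp only: sum.shift_bounds_cl_nat_ivl)
  qed
  also have "\<dots> = (\<Sum>m=0..n-k. (\<Sum>l\<in>mi_P m. cc f k l) * GG f s (k+m) (n-k-m))"
  proof (rule sum.cong)
    fix m assume m: "m \<in> {0..n-k}"
    have "fps_nth (f^k) (m+k) = (\<Sum>l\<in>mi_P m. cc f k l)" using lemA[OF f0, of k m] by (simp add: add.commute)
    moreover have "fps_nth (g^(m+k)) n = GG f s (k+m) (n-k-m)"
      using Suc.IH[of "k+m"] m Suc.prems unfolding g_def by (simp add: add.commute)
    ultimately show "fps_nth (f^k) (m+k) * fps_nth (g^(m+k)) n = (\<Sum>l\<in>mi_P m. cc f k l) * GG f s (k+m) (n-k-m)" by simp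
  qed simp
  also have "\<dots> = GG f (Suc s) k (n-k)"
    unfolding GG_Suc by (simp add: sum_distrib_right)
  finally show ?case .
qed

lemma tri: "(\<Sum>i=1..s. \<Sum>t=1..i-1. w t) = (\<Sum>t=1..s. (s - t) * (w t :: nat))"
proof (induction s)
  case 0 then show ?case by simp
next
  case (Suc s)
  have "(\<Sum>t=1..Suc s. (Suc s - t) * w t) = (\<Sum>t=1..s. (Suc s - t) * w t)"
    by (simp add: sum.cl_ivl_Suc)
  also have "\<dots> = (\<Sum>t=1..s. (s - t) * w t + w t)"
    by (rule sum.cong) (auto simp: Suc_diff_le)
  also have "\<dots> = (\<Sum>t=1..s. (s - t) * w t) + (\<Sum>t=1..s. w t)" by (rule sum.distrib)
  finally show ?case using Suc.IH by (simp add: sum.cl_ivl_Suc)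
qed

lemma supp_sum:
  assumes "\<forall>t\<in>{1..s}. {p. ls t p \<noteq> 0} \<subseteq> A"
  shows "{p. (\<Sum>t=1..s. ls t p) \<noteq> 0} \<subseteq> A"
proof
  fix p assume "p \<in> {p. (\<Sum>t=1..s. ls t p) \<noteq> 0}"
  then obtain t where "t \<in> {1..s}" "ls t p \<noteq> 0" by (metis (mono_tags, lifting) mem_Collect_eq sum.neutral)
  then show "p \<in> A" using assms by auto
qed

lemma wt_sum:
  assumes A: "finite A" and s: "\<forall>t\<in>{1..s}. {p. ls t p \<noteq> 0} \<subseteq> A"
  shows "mi_wt (\<lambda>p. \<Sum>t=1..s. ls t p) = (\<Sum>t=1..s. mi_wt (ls t))"
proof -
  have "mi_wt (\<lambda>p. \<Sum>t=1..s. ls t p) = (\<Sum>p\<in>A. p * (\<Sum>t=1..s. ls t p))"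
    by (rule mi_wt_eq[OF A supp_sum[OF s]])
  also have "\<dots> = (\<Sum>p\<in>A. \<Sum>t=1..s. p * ls t p)" by (simp add: sum_distrib_left)
  also have "\<dots> = (\<Sum>t=1..s. \<Sum>p\<in>A. p * ls t p)" by (rule sum.swap)
  also have "\<dots> = (\<Sum>t=1..s. mi_wt (ls t))"
    by (rule sum.cong) (use s mi_wt_eq[OF A] in auto)
  finally show ?thesis .
qed

lemma abs_sum:
  assumes A: "finite A" and s: "\<forall>t\<in>{1..s}. {p. ls t p \<noteq> 0} \<subseteq> A"
  shows "mi_abs (\<lambda>p. \<Sum>t=1..s. ls t p) = (\<Sum>t=1..s. mi_abs (ls t))"
proof -
  have "mi_abs (\<lambda>p. \<Sum>t=1..s. ls t p) = (\<Sum>p\<in>A. (\<Sum>t=1..s. ls t p))"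
    by (rule mi_abs_eq[OF A supp_sum[OF s]])
  also have "\<dots> = (\<Sum>t=1..s. \<Sum>p\<in>A. ls t p)" by (rule sum.swap)
  also have "\<dots> = (\<Sum>t=1..s. mi_abs (ls t))"
    by (rule sum.cong) (use s mi_abs_eq[OF A] in auto)
  finally show ?thesis .
qed

lemma Tup_supp:
  assumes ls: "ls \<in> Tup s m" and t: "t \<in> {1..s}"
  shows "{p. ls t p \<noteq> 0} \<subseteq> {1..m}"
proof -
  have l: "ls t 0 = 0" "finite {p. ls t p \<noteq> 0}" using ls t unfolding Tup_def by auto
  have P: "ls t \<in> mi_P (mi_wt (ls t))" by (rule P_memI[OF l refl])
  have "mi_wt (ls t) \<le> (\<Sum>t=1..s. mi_wt (ls t))" by (rule member_le_sum) (use t in auto)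
  then have "mi_wt (ls t) \<le> m" using ls unfolding Tup_def by simp
  then show ?thesis using mi_P_supp[OF P] by auto
qed

lemma decomp_supp:
  assumes L: "L \<in> mi_P m" and ls: "ls \<in> mi_decomp s L" and t: "t \<in> {1..s}"
  shows "{p. ls t p \<noteq> 0} \<subseteq> {1..m}"
proof
  fix p assume p: "p \<in> {p. ls t p \<noteq> 0}"
  have "ls t p \<le> (\<Sum>t=1..s. ls t p)" by (rule member_le_sum) (use t in auto)
  also have "\<dots> = L p" using ls unfolding mi_decomp_def by auto
  finally have "L p \<noteq> 0" using p by auto
  then show "p \<in> {1..m}" using mi_P_supp[OF L] by auto
qed

lemma decomp_L: "ls \<in> mi_decomp s L \<Longrightarrow> L = (\<lambda>p. \<Sum>t=1..s. ls t p)"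
  unfolding mi_decomp_def by auto

lemma union_decomp: "(\<Union>L\<in>mi_P m. mi_decomp s L) = Tup s m"
proof safe
  fix L ls assume L: "L \<in> mi_P m" and ls: "ls \<in> mi_decomp s L"
  have s: "\<forall>t\<in>{1..s}. {p. ls t p \<noteq> 0} \<subseteq> {1..m}" using decomp_supp[OF L ls] by blast
  have "(\<Sum>t=1..s. mi_wt (ls t)) = mi_wt L"
    using wt_sum[OF _ s] decomp_L[OF ls] by simp
  also have "\<dots> = m" using L by (simp add: mi_P_def)
  finally show "ls \<in> Tup s m" using ls unfolding mi_decomp_def Tup_def by blast
next
  fix ls assume ls: "ls \<in> Tup s m"
  define L where "L = (\<lambda>p. \<Sum>t=1..s. ls t p)"
  have s: "\<forall>t\<in>{1..s}. {p. ls t p \<noteq> 0} \<subseteq> {1..m}" using Tup_supp[OF ls] by blast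
  have "L 0 = 0" unfolding L_def using ls unfolding Tup_def by simp
  moreover have "finite {p. L p \<noteq> 0}" unfolding L_def
    by (rule finite_subset[OF supp_sum[OF s]]) simp
  moreover have "mi_wt L = m" unfolding L_def using wt_sum[OF _ s] ls unfolding Tup_def by simp
  ultimately have "L \<in> mi_P m" by (rule P_memI)
  moreover have "ls \<in> mi_decomp s L" using ls unfolding mi_decomp_def Tup_def L_def by auto
  ultimately show "ls \<in> (\<Union>L\<in>mi_P m. mi_decomp s L)" by blast
qed

lemma termwise:
  fixes f :: "complex fps"
  assumes ls: "ls \<in> Tup s m"
  defines "L \<equiv> (\<lambda>p. \<Sum>t=1..s. ls t p)"
  shows "(fps_nth f 1) powi ((\<Sum>t=1..s. int (s - t) * int (mi_wt (ls t))) + int s * int k - int (mi_abs L))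
      * (\<Prod>i=1..s. mi_multinom ((\<Sum>t=1..i-1. mi_wt (ls t)) + k) (ls i))
      * (\<Prod>p=1..m. (fps_nth f (p+1)) ^ L p) = tterm f s k ls"
proof -
  define N where "N = (\<lambda>i. (\<Sum>t=1..i-1. mi_wt (ls t)) + k)"
  define q where "q = fps_nth f 1"
  define a where "a = (\<lambda>p. fps_nth f (p+1))"
  have sp: "\<forall>t\<in>{1..s}. {p. ls t p \<noteq> 0} \<subseteq> {1..m}" using Tup_supp[OF ls] by blast
  have tt: "tterm f s k ls = (\<Prod>i=1..s. mi_multinom (N i) (ls i) * q ^ (N i - mi_abs (ls i))
      * (\<Prod>p\<in>{p. ls i p \<noteq> 0}. a p ^ ls i p))"
    unfolding tterm_def cc_def N_def q_def a_def ..
  show ?thesis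
  proof (cases "\<exists>i\<in>{1..s}. \<not> mi_abs (ls i) \<le> N i")
    case True
    then obtain i where i: "i \<in> {1..s}" "\<not> mi_abs (ls i) \<le> N i" by blast
    have z: "mi_multinom (N i) (ls i) = 0" using i(2) unfolding mi_multinom_def by simp
    have "tterm f s k ls = 0" unfolding tt by (rule prod_zero) (use i z in auto)
    moreover have "(\<Prod>i=1..s. mi_multinom ((\<Sum>t=1..i-1. mi_wt (ls t)) + k) (ls i)) = 0"
      by (rule prod_zero) (use i z N_def in auto)
    ultimately show ?thesis by simp
  next
    case False
    then have le: "\<forall>i\<in>{1..s}. mi_abs (ls i) \<le> N i" by blast
    have h1: "(\<Sum>i=1..s. N i) = (\<Sum>t=1..s. (s - t) * mi_wt (ls t)) + s * k"
      unfolding N_def sum.distrib tri by simp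
    have h2: "mi_abs L = (\<Sum>i=1..s. mi_abs (ls i))" unfolding L_def by (rule abs_sum[OF _ sp]) simp
    have h3: "(\<Sum>i=1..s. mi_abs (ls i)) \<le> (\<Sum>i=1..s. N i)" by (rule sum_mono) (use le in auto)
    have h4: "(\<Sum>i=1..s. N i - mi_abs (ls i)) = (\<Sum>i=1..s. N i) - (\<Sum>i=1..s. mi_abs (ls i))"
      by (rule sum_subtractf_nat) (use le in auto)
    have E: "(\<Sum>t=1..s. int (s - t) * int (mi_wt (ls t))) + int s * int k - int (mi_abs L)
        = int (\<Sum>i=1..s. N i - mi_abs (ls i))"
    proof -
      have "(\<Sum>t=1..s. int (s - t) * int (mi_wt (ls t))) + int s * int k = int (\<Sum>i=1..s. N i)"
        unfolding h1 by (simp add: of_nat_sum)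
      then show ?thesis unfolding h4 h2 using h3 by (simp add: of_nat_diff)
    qed
    have Q: "q powi ((\<Sum>t=1..s. int (s - t) * int (mi_wt (ls t))) + int s * int k - int (mi_abs L))
       = (\<Prod>i=1..s. q ^ (N i - mi_abs (ls i)))"
      unfolding E power_int_of_nat by (rule power_sum)
    have Y: "(\<Prod>p=1..m. a p ^ L p) = (\<Prod>i=1..s. \<Prod>p\<in>{p. ls i p \<noteq> 0}. a p ^ ls i p)"
    proof -
      have "(\<Prod>p=1..m. a p ^ L p) = (\<Prod>p=1..m. \<Prod>i=1..s. a p ^ ls i p)"
        unfolding L_def by (simp add: power_sum)
      also have "\<dots> = (\<Prod>i=1..s. \<Prod>p=1..m. a p ^ ls i p)" by (rule prod.swap)
      also have "\<dots> = (\<Prod>i=1..s. \<Prod>p\<in>{p. ls i p \<noteq> 0}. a p ^ ls i p)"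
      proof (rule prod.cong)
        fix i assume "i \<in> {1..s}"
        then have "{p. ls i p \<noteq> 0} \<subseteq> {1..m}" using sp by blast
        then show "(\<Prod>p=1..m. a p ^ ls i p) = (\<Prod>p\<in>{p. ls i p \<noteq> 0}. a p ^ ls i p)"
          using prod_pow_eq[of "{1..m}" "ls i" a] by simp
      qed simp
      finally show ?thesis .
    qed
    have M: "(\<Prod>i=1..s. mi_multinom ((\<Sum>t=1..i-1. mi_wt (ls t)) + k) (ls i)) = (\<Prod>i=1..s. mi_multinom (N i) (ls i))"
      by (simp add: N_def)
    have "(fps_nth f 1) powi ((\<Sum>t=1..s. int (s - t) * int (mi_wt (ls t))) + int s * int k - int (mi_abs L))
      * (\<Prod>i=1..s. mi_multinom ((\<Sum>t=1..i-1. mi_wt (ls t)) + k) (ls i))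
      * (\<Prod>p=1..m. (fps_nth f (p+1)) ^ L p) = (\<Prod>i=1..s. q ^ (N i - mi_abs (ls i))) * (\<Prod>i=1..s. mi_multinom (N i) (ls i))
        * (\<Prod>i=1..s. \<Prod>p\<in>{p. ls i p \<noteq> 0}. a p ^ ls i p)"
      by (simp only: Q[unfolded q_def] M Y[unfolded a_def] q_def a_def)
    also have "\<dots> = tterm f s k ls" unfolding tt prod.distrib by (simp only: mult_ac)
    finally show ?thesis .
  qed
qed

lemma conv:
  fixes f :: "complex fps"
  shows "(\<Sum>L\<in>mi_P m. coeffC f s k L * (\<Prod>p=1..m. (fps_nth f (p+1)) ^ L p)) = GG f s k m"
proof -
  define X where "X = (\<lambda>ls. (fps_nth f 1) powi ((\<Sum>t=1..s. int (s - t) * int (mi_wt (ls t))) + int s * int k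
      - int (mi_abs (\<lambda>p. \<Sum>t=1..s. ls t p)))
      * (\<Prod>i=1..s. mi_multinom ((\<Sum>t=1..i-1. mi_wt (ls t)) + k) (ls i))
      * (\<Prod>p=1..m. (fps_nth f (p+1)) ^ (\<Sum>t=1..s. ls t p)))"
  have fin: "finite (mi_decomp s L)" if "L \<in> mi_P m" for L
  proof (rule finite_subset[OF _ finite_Tup[of s m]])
    have "mi_decomp s L \<subseteq> (\<Union>L\<in>mi_P m. mi_decomp s L)" using that by blast
    then show "mi_decomp s L \<subseteq> Tup s m" unfolding union_decomp .
  qed
  have "(\<Sum>L\<in>mi_P m. coeffC f s k L * (\<Prod>p=1..m. (fps_nth f (p+1)) ^ L p))
      = (\<Sum>L\<in>mi_P m. \<Sum>ls\<in>mi_decomp s L. X ls)"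
  proof (rule sum.cong)
    fix L assume L: "L \<in> mi_P m"
    show "coeffC f s k L * (\<Prod>p=1..m. (fps_nth f (p+1)) ^ L p) = (\<Sum>ls\<in>mi_decomp s L. X ls)"
      unfolding coeffC_def sum_distrib_right
    proof (rule sum.cong)
      fix ls assume "ls \<in> mi_decomp s L"
      then have "L = (\<lambda>p. \<Sum>t=1..s. ls t p)" by (rule decomp_L)
      then show "(fps_nth f 1) powi ((\<Sum>t=1..s. int (s - t) * int (mi_wt (ls t))) + int s * int k - int (mi_abs L)) *
         (\<Prod>i=1..s. mi_multinom ((\<Sum>t=1..i-1. mi_wt (ls t)) + k) (ls i)) *
         (\<Prod>p=1..m. (fps_nth f (p+1)) ^ L p) = X ls" unfolding X_def by simp
    qed simp
  qed simp
  also have "\<dots> = (\<Sum>ls\<in>(\<Union>L\<in>mi_P m. mi_decomp s L). X ls)"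
  proof (rule sum.UNION_disjoint[symmetric])
    show "\<forall>i\<in>mi_P m. \<forall>j\<in>mi_P m. i \<noteq> j \<longrightarrow> mi_decomp s i \<inter> mi_decomp s j = {}"
      using decomp_L by blast
  qed (auto simp: finite_mi_P fin)
  also have "\<dots> = (\<Sum>ls\<in>Tup s m. X ls)" unfolding union_decomp ..
  also have "\<dots> = GG f s k m" unfolding GG_def
    by (rule sum.cong) (use termwise X_def in auto)
  finally show ?thesis .
qed

theorem mainTheorem4:
  fixes f :: "complex fps"
  assumes "fps_nth f 0 = 0" and "fps_nth f 1 \<noteq> 0"
  shows "\<forall>s n k. k \<le> n \<longrightarrow>
    phi_bracket f s n k = fact n / fact k *
      (\<Sum>L\<in>mi_P (n - k). coeffC f s k L * (\<Prod>p=1..n-k. (fps_nth f (p+1)) ^ L p))"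
proof (intro allI impI)
  fix s n k :: nat assume kn: "k \<le> n"
  have "phi_bracket f s n k = fact n * (1 / fact k) * fps_nth (fps_iter f s ^ k) n"
    unfolding phi_bracket_def by simp
  also have "\<dots> = fact n / fact k * GG f s k (n - k)" using main_T[OF assms(1) kn] by simp
  finally show "phi_bracket f s n k = fact n / fact k *
      (\<Sum>L\<in>mi_P (n - k). coeffC f s k L * (\<Prod>p=1..n-k. (fps_nth f (p+1)) ^ L p))"
    unfolding conv .
qed

end
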